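(* Galkin's lower bound holds for each of the following Grassmannians: (1) $\mathrm{Gr}(1,n)$ ($\cong\mathbb{P}^{n-1}$) for $n\geq 2$; (2) $\mathrm{Gr}(2,n)$ for $n\geq 3$; (3) $\mathrm{Gr}(3,n)$ for $n\geq 4$; (4) $\mathrm{Gr}(k,n)$ for $k\geq 4$ and $n\geq 2(k-1)$. Here "Galkin's lower bound holds for $\mathrm{Gr}(k,n)$" means: the largest real eigenvalue $\delta_0$ of $\hat c_1$ for $\mathrm{Gr}(k,n)$ satisfies $\delta_0\geq k(n-k)+1$, with equality if and only if $\mathrm{Gr}(k,n)$ is isomorphic to the projective space $\mathbb{P}^{n-1}$.
   Context: $\mathrm{Gr}(k,n)$ is the Grassmannian of $k$-dimensional linear subspaces of $\mathbb{C}^n$, of dimension $k(n-k)$. Let $\Lambda$ be the set of partitions $\lambda=(\lambda_1\geq \cdots\geq \lambda_k)$ with $n-k\geq \lambda_1$ and $\lambda_k\geq 0$, and $|\lambda|=\lambda_1+\cdots+\lambda_k$. For $\lambda\in\Lambda$ with $\lambda_1=n-k$ and $\lambda_k>0$ put $\lambda^*=(\lambda_2-1\geq\cdots\geq\lambda_k-1\geq 0)$; otherwise $\lambda^*$ does not exist. The operator $\hat c_1$ (quantum multiplication by $c_1(\mathrm{Gr}(k,n))=n\sigma_{(1)}$ specialized at $q=1$) is the linear endomorphism of the vector space with basis $\{\sigma_\lambda\}_{\lambda\in\Lambda}$ given by $\hat c_1(\sigma_\lambda)=n\sigma_{\lambda^*}+n\sum\sigma_\mu$, the sum over all $\mu\in\Lambda$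 with $|\mu|=|\lambda|+1$ and $\lambda\subset\mu$, the term $n\sigma_{\lambda^*}$ omitted if $\lambda^*$ does not exist. $\delta_0$ is the largest real eigenvalue of $\hat c_1$ (equal to the maximum modulus of its eigenvalues). *)

theory Defs
  imports Complex_Main
begin

text \<open>Partitions lambda = (lambda_1 >= ... >= lambda_k) with n-k >= lambda_1 and lambda_k >= 0,
  represented as lists of length k (entry i is lambda_(i+1)).\<close>

definition partitions :: "nat \<Rightarrow> nat \<Rightarrow> nat list set" where
  "partitions k n = {l. length l = k \<and> sorted_wrt (\<ge>) l \<and> (\<forall>x\<in>set l. x \<le> n - k)}"

definition psize :: "nat list \<Rightarrow> nat" where
  "psize l = sum_list l"

definition pcontained :: "nat list \<Rightarrow> nat list \<Rightarrow> bool" where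
  "pcontained l m \<longleftrightarrow> length l = length m \<and> (\<forall>i<length l. l ! i \<le> m ! i)"

definition star_exists :: "nat \<Rightarrow> nat \<Rightarrow> nat list \<Rightarrow> bool" where
  "star_exists k n l \<longleftrightarrow> l \<noteq> [] \<and> hd l = n - k \<and> last l > 0"

definition pstar :: "nat list \<Rightarrow> nat list" where
  "pstar l = map (\<lambda>x. x - 1) (tl l) @ [0]"

text \<open>Matrix of \<open>c1_hat\<close> in the basis sigma_lambda:
  \<open>c1_hat_coeff k n mu lam\<close> is the coefficient of sigma_mu in c1_hat(sigma_lam).\<close>
definition c1_hat_coeff :: "nat \<Rightarrow> nat \<Rightarrow> nat list \<Rightarrow> nat list \<Rightarrow> complex" where
  "c1_hat_coeff k n mu lam =
     (if star_exists k n lam \<and> mu = pstar lam then of_nat n else 0)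
   + (if mu \<in> partitions k n \<and> psize mu = psize lam + 1 \<and> pcontained lam mu then of_nat n else 0)"

definition c1_hat_eigenvalue :: "nat \<Rightarrow> nat \<Rightarrow> complex \<Rightarrow> bool" where
  "c1_hat_eigenvalue k n z \<longleftrightarrow>
     (\<exists>v :: nat list \<Rightarrow> complex.
        (\<exists>lam\<in>partitions k n. v lam \<noteq> 0) \<and>
        (\<forall>mu\<in>partitions k n. (\<Sum>lam\<in>partitions k n. c1_hat_coeff k n mu lam * v lam) = z * v mu))"

definition real_eigenvalues :: "nat \<Rightarrow> nat \<Rightarrow> real set" where
  "real_eigenvalues k n = {x. c1_hat_eigenvalue k n (complex_of_real x)}"

definition delta0 :: "nat \<Rightarrow> nat \<Rightarrow> real" where
  "delta0 k n = Max (real_eigenvalues k n)"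

text \<open>Gr(k,n) (1 <= k <= n-1) is isomorphic to P^(n-1) iff k = 1 or k = n-1.\<close>
definition grass_iso_proj :: "nat \<Rightarrow> nat \<Rightarrow> bool" where
  "grass_iso_proj k n \<longleftrightarrow> k = 1 \<or> k = n - 1"

definition galkin_lower_bound :: "nat \<Rightarrow> nat \<Rightarrow> bool" where
  "galkin_lower_bound k n \<longleftrightarrow>
     finite (real_eigenvalues k n) \<and> real_eigenvalues k n \<noteq> {} \<and>
     delta0 k n \<ge> real (k * (n - k)) + 1 \<and>
     (delta0 k n = real (k * (n - k)) + 1 \<longleftrightarrow> grass_iso_proj k n)"

end

theory Submission
  imports Defs "Jordan_Normal_Form.Char_Poly" "HOL-Analysis.Complex_Transcendental"
begin


lemma finite_eigs_gen:
  fixes c :: "'a \<Rightarrow> 'a \<Rightarrow> complex" and P :: "'a set"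
  assumes fin: "finite P"
  shows "finite {z. \<exists>v. (\<exists>l\<in>P. v l \<noteq> 0) \<and> (\<forall>m\<in>P. (\<Sum>l\<in>P. c m l * v l) = z * v m)}"
proof -
  define N where "N = card P"
  obtain f where f: "bij_betw f {0..<N} P" using ex_bij_betw_nat_finite[OF fin] N_def by blast
  define A :: "complex mat" where "A = Matrix.mat N N (\<lambda>(i,j). c (f i) (f j))"
  have A: "A \<in> carrier_mat N N" unfolding A_def by simp
  have cp: "char_poly A \<noteq> 0"
    using degree_monic_char_poly[OF A] by (metis coeff_0 zero_neq_one)
  have "{z. \<exists>v. (\<exists>l\<in>P. v l \<noteq> 0) \<and> (\<forall>m\<in>P. (\<Sum>l\<in>P. c m l * v l) = z * v m)}
        \<subseteq> {z. poly (char_poly A) z = 0}"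
  proof safe
    fix z v l assume l: "l \<in> P" "v l \<noteq> 0" and ev: "\<forall>m\<in>P. (\<Sum>l\<in>P. c m l * v l) = z * v m"
    define w where "w = Matrix.vec N (\<lambda>i. v (f i))"
    obtain i where i: "i < N" "f i = l" using f l unfolding bij_betw_def by auto
    have w0: "w \<noteq> 0\<^sub>v N"
    proof
      assume "w = 0\<^sub>v N"
      then have "w $ i = 0" using i by simp
      then show False using i l unfolding w_def by simp
    qed
    have "A *\<^sub>v w = z \<cdot>\<^sub>v w"
    proof (rule eq_vecI)
      fix i assume i: "i < dim_vec (z \<cdot>\<^sub>v w)"
      then have iN: "i < N" unfolding w_def by simp
      have "(A *\<^sub>v w) $ i = (\<Sum>j<N. c (f i) (f j) * v (f j))"
        using iN unfolding A_def w_def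
        by (simp add: mult_mat_vec_def scalar_prod_def atLeast0LessThan)
      also have "\<dots> = (\<Sum>l\<in>P. c (f i) l * v l)"
        using sum.reindex_bij_betw[OF f, of "\<lambda>l. c (f i) l * v l"] by (simp add: atLeast0LessThan)
      also have "\<dots> = z * v (f i)" using ev f iN unfolding bij_betw_def by auto
      finally show "(A *\<^sub>v w) $ i = (z \<cdot>\<^sub>v w) $ i" using iN unfolding w_def by simp
    qed (simp add: A_def w_def)
    then have "eigenvector A w z" unfolding eigenvector_def using A w0 unfolding w_def by auto
    then have "eigenvalue A z" unfolding eigenvalue_def by blast
    then show "poly (char_poly A) z = 0" using eigenvalue_root_char_poly[OF A] by simp
  qed
  then show ?thesis using poly_roots_finite[OF cp] finite_subset by blast
qed




lemma prod_linear_deg_coeff: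
  fixes a b :: "'x \<Rightarrow> 'a::comm_ring_1"
  assumes "finite S"
  shows "degree (\<Prod>j\<in>S. [:a j, b j:]) \<le> card S \<and> coeff (\<Prod>j\<in>S. [:a j, b j:]) (card S) = (\<Prod>j\<in>S. b j)"
  using assms
proof (induction S rule: finite_induct)
  case empty then show ?case by simp
next
  case (insert x F)
  let ?p = "\<Prod>j\<in>F. [:a j, b j:]"
  have eq: "(\<Prod>j\<in>insert x F. [:a j, b j:]) = [:a x, b x:] * ?p" using insert by simp
  have d: "degree ([:a x, b x:] * ?p) \<le> Suc (card F)"
  proof -
    have "degree [:a x, b x:] \<le> 1" by (simp add: degree_pCons_le)
    then show ?thesis using degree_mult_le[of "[:a x, b x:]" ?p] insert.IH by linarith
  qed
  have "coeff ([:a x, b x:] * ?p) (Suc (card F)) = a x * coeff ?p (Suc (card F)) + b x * coeff ?p (card F)"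
    by (simp add: mult_pCons_left coeff_pCons)
  also have "coeff ?p (Suc (card F)) = 0" using insert.IH by (simp add: coeff_eq_0)
  finally show ?case using insert eq d by (simp add: mult.commute)
qed

lemma lagrange_q:
  fixes u :: "nat \<Rightarrow> 'a::field"
  assumes dist: "\<And>i j. i < k \<Longrightarrow> j < k \<Longrightarrow> i \<noteq> j \<Longrightarrow> u i \<noteq> u j"
    and nz: "\<And>i. i < k \<Longrightarrow> u i \<noteq> 0" and q1: "q \<noteq> 1"
  shows "(\<Sum>i<k. \<Prod>j\<in>{..<k}-{i}. (q * u i - u j) / (u i - u j)) = (\<Sum>m<k. q ^ m)"
proof (cases "k = 0")
  case True then show ?thesis by simp
next
  case False
  define L where "L = (\<Prod>j<k. [:- u j, q:])"
  define M where "M = (\<Prod>j<k. [:- u j, 1:])"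
  define B where "B i = (\<Prod>j\<in>{..<k}-{i}. [:- u j, 1:])" for i
  define c where "c i = poly L (u i) / (\<Prod>j\<in>{..<k}-{i}. (u i - u j))" for i
  define N where "N = L - Polynomial.smult (q ^ k) M - (\<Sum>i<k. Polynomial.smult (c i) (B i))"
  have L: "degree L \<le> k" "coeff L k = q ^ k"
    using prod_linear_deg_coeff[of "{..<k}" "\<lambda>j. - u j" "\<lambda>j. q"] unfolding L_def by auto
  have M: "degree M \<le> k" "coeff M k = 1"
    using prod_linear_deg_coeff[of "{..<k}" "\<lambda>j. - u j" "\<lambda>j. 1"] unfolding M_def by auto
  have Bd: "degree (B i) \<le> k - 1" if "i < k" for i
  proof -
    have "card ({..<k}-{i}) = k - 1" using that by simp
    then show ?thesis using prod_linear_deg_coeff[of "{..<k}-{i}" "\<lambda>j. - u j" "\<lambda>j. 1"] unfolding B_def by auto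
  qed
  have Sd: "degree (\<Sum>i<k. Polynomial.smult (c i) (B i)) \<le> k - 1"
  proof (rule degree_sum_le)
    fix i assume "i \<in> {..<k}"
    then show "degree (Polynomial.smult (c i) (B i)) \<le> k - 1" using Bd[of i] degree_smult_le[of "c i" "B i"] by simp
  qed simp
  have "coeff N k = 0"
  proof -
    have "coeff (\<Sum>i<k. Polynomial.smult (c i) (B i)) k = 0" using Sd False by (simp add: coeff_eq_0)
    then show ?thesis unfolding N_def using L M by simp
  qed
  moreover have "degree N \<le> k"
    unfolding N_def using L M Sd
    by (meson degree_diff_le degree_smult_le diff_le_self dual_order.trans)
  ultimately have Nd: "degree N < k \<or> N = 0"
    by (metis False le_neq_implies_less leading_coeff_0_iff)
  have roots: "poly N (u m) = 0" if m: "m < k" for m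
  proof -
    have Mm: "poly M (u m) = 0" unfolding M_def poly_prod using m
      by (intro prod_zero) auto
    have Bi: "poly (B i) (u m) = 0" if "i < k" "i \<noteq> m" for i
      unfolding B_def poly_prod using m that by (intro prod_zero) auto
    have "(\<Sum>i<k. c i * poly (B i) (u m)) = c m * poly (B m) (u m)"
      by (rule sum.remove[where x=m, THEN trans]) (use m Bi in auto)
    also have "poly (B m) (u m) = (\<Prod>j\<in>{..<k}-{m}. (u m - u j))"
      unfolding B_def poly_prod by simp
    also have "c m * \<dots> = poly L (u m)"
      unfolding c_def using dist m by (simp add: prod_zero_iff)
    finally show ?thesis unfolding N_def using Mm by (simp add: poly_sum)
  qed
  have N0: "N = 0"
  proof (rule ccontr)
    assume N: "N \<noteq> 0"
    have "u ` {..<k} \<subseteq> {x. poly N x = 0}" using roots by auto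
    then have "card (u ` {..<k}) \<le> card {x. poly N x = 0}"
      by (intro card_mono poly_roots_finite N)
    moreover have "card (u ` {..<k}) = k" using dist by (subst card_image) (auto simp: inj_on_def)
    ultimately have "k \<le> degree N" using card_poly_roots_bound[OF N] by linarith
    then show False using Nd N by simp
  qed
  define U where "U = (\<Prod>j<k. - u j)"
  have U0: "U \<noteq> 0" unfolding U_def using nz by auto
  have PL: "poly L (u i) = (q - 1) * u i * (\<Prod>j\<in>{..<k}-{i}. (q * u i - u j))" if "i < k" for i
    unfolding L_def poly_prod using that
    by (subst prod.remove[of _ i]) (auto simp: algebra_simps)
  have PB: "poly (B i) 0 = U / (- u i)" if "i < k" for i
    unfolding B_def U_def poly_prod using that nz[OF that]
    by (subst prod.remove[of "{..<k}" i]) auto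
  have "poly N 0 = 0" using N0 by simp
  then have E1: "U - q ^ k * U - (\<Sum>i<k. c i * (U / (- u i))) = 0"
    unfolding N_def using PB by (simp add: poly_sum L_def M_def U_def poly_prod)
  have E2: "c i * (U / (- u i)) = - ((q - 1) * U * (\<Prod>j\<in>{..<k}-{i}. (q * u i - u j) / (u i - u j)))"
    if "i < k" for i
  proof -
    have D: "(\<Prod>j\<in>{..<k}-{i}. (u i - u j)) \<noteq> 0" using dist that by (simp add: prod_zero_iff)
    show ?thesis unfolding c_def PL[OF that] using nz[OF that] D by (simp add: prod_dividef field_simps)
  qed
  define T where "T = (\<Sum>i<k. \<Prod>j\<in>{..<k}-{i}. (q * u i - u j) / (u i - u j))"
  have "(\<Sum>i<k. c i * (U / (- u i))) = (\<Sum>i<k. - ((q - 1) * U * (\<Prod>j\<in>{..<k}-{i}. (q * u i - u j) / (u i - u j))))"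
    using E2 by (intro sum.cong) auto
  then have "U - q ^ k * U + (q - 1) * U * T = 0"
    using E1 unfolding T_def by (simp add: sum_distrib_left sum_negf)
  then have "U * (1 - q ^ k + (q - 1) * T) = 0"
    by (simp add: algebra_simps)
  then have "1 - q ^ k + (q - 1) * T = 0" using U0 by simp
  then have "(q - 1) * (\<Sum>i<k. \<Prod>j\<in>{..<k}-{i}. (q * u i - u j) / (u i - u j)) = q ^ k - 1"
    unfolding T_def[symmetric] by (simp add: algebra_simps eq_diff_eq)
  moreover have "(q - 1) * (\<Sum>m<k. q ^ m) = q ^ k - 1"
    using one_diff_power_eq[where x=q and n=k] by (simp add: algebra_simps)
  ultimately have "(q - 1) * (\<Sum>i<k. \<Prod>j\<in>{..<k}-{i}. (q * u i - u j) / (u i - u j)) = (q - 1) * (\<Sum>m<k. q ^ m)"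
    by (simp only:)
  moreover have "q - 1 \<noteq> 0" using q1 by simp
  ultimately show ?thesis by (meson mult_left_cancel)
qed


lemma sin_cis: "complex_of_real (sin x) = (cis x - inverse (cis x)) / (2 * \<i>)"
  by (simp add: complex_eq_iff cis.ctr)

lemma trig_lagrange:
  fixes c :: "nat \<Rightarrow> real"
  assumes nz: "\<And>i j. i < k \<Longrightarrow> j < k \<Longrightarrow> i \<noteq> j \<Longrightarrow> sin (\<theta> * (c i - c j)) \<noteq> 0"
    and st: "sin \<theta> \<noteq> 0"
  shows "(\<Sum>i<k. \<Prod>j\<in>{..<k}-{i}. sin (\<theta> * (c i - c j) - \<theta>) / sin (\<theta> * (c i - c j)))
         = (\<Sum>m<k. cos ((real k - 1 - 2 * real m) * \<theta>))"
proof -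
  define t where "t = cis \<theta>"
  define a where "a i = cis (\<theta> * c i)" for i
  define u where "u i = (a i)^2" for i
  define q where "q = inverse (t ^ 2)"
  have t0: "t \<noteq> 0" and a0: "\<And>i. a i \<noteq> 0" unfolding t_def a_def by auto
  have key: "complex_of_real (sin (\<theta> * (c i - c j) - \<theta>) / sin (\<theta> * (c i - c j)))
       = t * (q * u i - u j) / (u i - u j)"
    and ud: "u i \<noteq> u j"
    if "i < k" "j < k" "i \<noteq> j" for i j
  proof -
    have e1: "cis (\<theta> * (c i - c j)) = a i / a j" unfolding a_def by (simp add: cis_divide right_diff_distrib)
    have e2: "cis (\<theta> * (c i - c j) - \<theta>) = a i / (a j * t)" unfolding a_def t_def
      by (simp add: cis_divide cis_mult right_diff_distrib diff_diff_eq)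
    have s1: "complex_of_real (sin (\<theta> * (c i - c j))) = (a i / a j - a j / a i) / (2 * \<i>)"
      by (simp add: sin_cis e1)
    have s2: "complex_of_real (sin (\<theta> * (c i - c j) - \<theta>)) = (a i / (a j * t) - (a j * t) / a i) / (2 * \<i>)"
      by (simp add: sin_cis e2)
    have sn: "a i / a j - a j / a i \<noteq> 0"
    proof
      assume "a i / a j - a j / a i = 0"
      then have "complex_of_real (sin (\<theta> * (c i - c j))) = 0" using s1 by simp
      then show False using nz[OF that] by simp
    qed
    have "u i - u j = a i * a j * (a i / a j - a j / a i)" unfolding u_def using a0
      by (simp add: field_simps power2_eq_square)
    then have "u i - u j \<noteq> 0" using sn a0[of i] a0[of j] by (simp only: mult_eq_0_iff) simp
    then show ud: "u i \<noteq> u j" by simp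
    have "complex_of_real (sin (\<theta> * (c i - c j) - \<theta>) / sin (\<theta> * (c i - c j)))
        = (a i / (a j * t) - (a j * t) / a i) / (a i / a j - a j / a i)"
      by (simp add: s1 s2)
    also have "\<dots> = t * (q * u i - u j) / (u i - u j)"
      using sn ud a0[of i] a0[of j] t0 unfolding u_def q_def
      by (simp add: field_simps power2_eq_square)
    finally show "complex_of_real (sin (\<theta> * (c i - c j) - \<theta>) / sin (\<theta> * (c i - c j)))
       = t * (q * u i - u j) / (u i - u j)" .
  qed
  have q1: "q \<noteq> 1"
  proof
    assume "q = 1"
    then have "t ^ 2 = 1" unfolding q_def by (metis inverse_1 inverse_inverse_eq)
    then have "t - inverse t = 0" using t0 by (simp add: field_simps power2_eq_square)
    then have "complex_of_real (sin \<theta>) = 0" by (simp add: sin_cis t_def)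
    then show False using st by simp
  qed
  have "complex_of_real (\<Sum>i<k. \<Prod>j\<in>{..<k}-{i}. sin (\<theta> * (c i - c j) - \<theta>) / sin (\<theta> * (c i - c j)))
      = (\<Sum>i<k. \<Prod>j\<in>{..<k}-{i}. t * ((q * u i - u j) / (u i - u j)))"
    unfolding of_real_sum of_real_prod
  proof (intro sum.cong refl prod.cong)
    fix i j assume "i \<in> {..<k}" "j \<in> {..<k} - {i}"
    then show "complex_of_real (sin (\<theta> * (c i - c j) - \<theta>) / sin (\<theta> * (c i - c j))) = t * ((q * u i - u j) / (u i - u j))"
      using key[of i j] by auto
  qed
  also have "\<dots> = (\<Sum>i<k. t ^ (k - 1) * (\<Prod>j\<in>{..<k}-{i}. (q * u i - u j) / (u i - u j)))"
  proof (intro sum.cong refl)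
    fix i assume "i \<in> {..<k}"
    then have "card ({..<k} - {i}) = k - 1" by simp
    then show "(\<Prod>j\<in>{..<k}-{i}. t * ((q * u i - u j) / (u i - u j))) = t ^ (k - 1) * (\<Prod>j\<in>{..<k}-{i}. (q * u i - u j) / (u i - u j))"
      by (simp only: prod.distrib prod_constant)
  qed
  also have "\<dots> = t ^ (k - 1) * (\<Sum>m<k. q ^ m)"
  proof -
    have "(\<Sum>i<k. \<Prod>j\<in>{..<k}-{i}. (q * u i - u j) / (u i - u j)) = (\<Sum>m<k. q ^ m)"
      by (rule lagrange_q) (use ud q1 a0 in \<open>auto simp: u_def\<close>)
    then show ?thesis by (simp add: sum_distrib_left[symmetric])
  qed
  also have "\<dots> = (\<Sum>m<k. cis ((real k - 1 - 2 * real m) * \<theta>))"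
  proof -
    have "t ^ (k - 1) * q ^ m = cis ((real k - 1 - 2 * real m) * \<theta>)" if "m < k" for m
    proof -
      have "t ^ (k - 1) * q ^ m = cis (real (k - 1) * \<theta>) * cis (- (2 * real m * \<theta>))"
        unfolding t_def q_def by (simp add: Complex.DeMoivre power_inverse power_mult[symmetric] cis_inverse mult.commute mult.left_commute)
      also have "\<dots> = cis ((real k - 1 - 2 * real m) * \<theta>)"
        using that by (simp add: cis_mult of_nat_diff algebra_simps)
      finally show ?thesis .
    qed
    then show ?thesis by (simp add: sum_distrib_left)
  qed
  finally have "complex_of_real (\<Sum>i<k. \<Prod>j\<in>{..<k}-{i}. sin (\<theta> * (c i - c j) - \<theta>) / sin (\<theta> * (c i - c j)))
     = (\<Sum>m<k. cis ((real k - 1 - 2 * real m) * \<theta>))" .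
  then have "Re (complex_of_real (\<Sum>i<k. \<Prod>j\<in>{..<k}-{i}. sin (\<theta> * (c i - c j) - \<theta>) / sin (\<theta> * (c i - c j))))
     = Re (\<Sum>m<k. cis ((real k - 1 - 2 * real m) * \<theta>))" by simp
  then show ?thesis by (simp only: Re_complex_of_real Re_sum) simp
qed




definition Pk :: "nat \<Rightarrow> real \<Rightarrow> (nat \<Rightarrow> real) \<Rightarrow> real" where
  "Pk k \<theta> b = (\<Prod>j<k. \<Prod>i<j. sin (\<theta> * (b i - b j)))"

lemma Pk_Sigma: "Pk k \<theta> b = (\<Prod>p\<in>(SIGMA j:{..<k}. {..<j}). sin (\<theta> * (b (snd p) - b (fst p))))"
  unfolding Pk_def by (subst prod.Sigma) (auto simp: split_def)

lemma Pk_ratio: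
  fixes b :: "nat \<Rightarrow> real"
  assumes i0: "i0 < k"
    and nz: "\<And>i j. i < k \<Longrightarrow> j < k \<Longrightarrow> i \<noteq> j \<Longrightarrow> sin (\<theta> * (b i - b j)) \<noteq> 0"
  shows "Pk k \<theta> (b(i0 := b i0 - 1)) = Pk k \<theta> b *
           (\<Prod>j\<in>{..<k}-{i0}. sin (\<theta> * (b i0 - b j) - \<theta>) / sin (\<theta> * (b i0 - b j)))"
proof -
  define S where "S = (SIGMA j:{..<k}. {..<j})"
  define g where "g x = sin (\<theta> * x - \<theta>) / sin (\<theta> * x)" for x
  define h where "h p = (if snd p = i0 then g (b i0 - b (fst p)) else if fst p = i0 then g (b i0 - b (snd p)) else 1)" for p
  let ?b' = "b(i0 := b i0 - 1)"
  have fin: "finite S" unfolding S_def by auto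
  have step: "sin (\<theta> * (?b' (snd p) - ?b' (fst p))) = sin (\<theta> * (b (snd p) - b (fst p))) * h p" if "p \<in> S" for p
  proof -
    obtain j i where p: "p = (j, i)" by (cases p)
    have ij: "i < j" "j < k" using that p unfolding S_def by auto
    show ?thesis
    proof (cases "i = i0")
      case True
      then have "j \<noteq> i0" using ij by auto
      moreover have "sin (\<theta> * (b i0 - b j)) \<noteq> 0" using nz[of i0 j] ij True by auto
      ultimately show ?thesis using True p unfolding h_def g_def by (simp add: algebra_simps)
    next
      case False
      show ?thesis
      proof (cases "j = i0")
        case True
        have ne: "sin (\<theta> * (b i0 - b i)) \<noteq> 0" using nz[of i0 i] ij True by auto
        have "\<theta> * (b i - (b i0 - 1)) = - (\<theta> * (b i0 - b i) - \<theta>)" by (simp add: algebra_simps)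
        then have "sin (\<theta> * (b i - (b i0 - 1))) = - sin (\<theta> * (b i0 - b i) - \<theta>)"
          by (simp only: sin_minus)
        moreover have "\<theta> * (b i - b i0) = - (\<theta> * (b i0 - b i))" by (simp add: algebra_simps)
        then have "sin (\<theta> * (b i - b i0)) = - sin (\<theta> * (b i0 - b i))"
          by (simp only: sin_minus)
        ultimately show ?thesis using True False p ne unfolding h_def g_def by simp
      next
        case False2: False
        then show ?thesis using False p unfolding h_def by simp
      qed
    qed
  qed
  have "Pk k \<theta> ?b' = (\<Prod>p\<in>S. sin (\<theta> * (b (snd p) - b (fst p))) * h p)"
    unfolding Pk_Sigma S_def[symmetric] by (rule prod.cong[OF refl]) (erule step)
  also have "\<dots> = Pk k \<theta> b * (\<Prod>p\<in>S. h p)"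
    unfolding Pk_Sigma S_def[symmetric] by (rule prod.distrib)
  also have "(\<Prod>p\<in>S. h p) = (\<Prod>p\<in>S \<inter> {p. fst p = i0 \<or> snd p = i0}. h p)"
    by (rule prod.mono_neutral_right) (auto simp: fin h_def)
  also have "\<dots> = (\<Prod>j\<in>{..<k}-{i0}. g (b i0 - b j))"
  proof (rule prod.reindex_bij_witness[of _ "\<lambda>j. if j < i0 then (i0, j) else (j, i0)" "\<lambda>p. if fst p = i0 then snd p else fst p"])
  qed (use i0 in \<open>auto simp: S_def h_def split: if_splits\<close>)
  finally show ?thesis unfolding g_def .
qed


lemma Pk_first: "Pk (Suc m) \<theta> c = (\<Prod>j<m. sin (\<theta> * (c 0 - c (Suc j)))) * Pk m \<theta> (\<lambda>j. c (Suc j))"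
proof -
  have "Pk (Suc m) \<theta> c = (\<Prod>j<m. \<Prod>i<Suc j. sin (\<theta> * (c i - c (Suc j))))"
    unfolding Pk_def by (subst prod.lessThan_Suc_shift) simp
  also have "\<dots> = (\<Prod>j<m. sin (\<theta> * (c 0 - c (Suc j))) * (\<Prod>i<j. sin (\<theta> * (c (Suc i) - c (Suc j)))))"
    by (intro prod.cong refl) (simp only: prod.lessThan_Suc_shift)
  also have "\<dots> = (\<Prod>j<m. sin (\<theta> * (c 0 - c (Suc j)))) * Pk m \<theta> (\<lambda>j. c (Suc j))"
    unfolding Pk_def by (rule prod.distrib)
  finally show ?thesis .
qed

lemma Pk_cong: "(\<And>j. j < k \<Longrightarrow> b j = b' j) \<Longrightarrow> Pk k \<theta> b = Pk k \<theta> b'"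
  unfolding Pk_def by (intro prod.cong refl) auto

lemma Pk_zero: "i < j \<Longrightarrow> j < k \<Longrightarrow> sin (\<theta> * (b i - b j)) = 0 \<Longrightarrow> Pk k \<theta> b = 0"
  unfolding Pk_def by (intro prod_zero) auto

lemma Pk_pos: "(\<And>i j. i < j \<Longrightarrow> j < k \<Longrightarrow> 0 < \<theta> * (b i - b j) \<and> \<theta> * (b i - b j) < pi) \<Longrightarrow> 0 < Pk k \<theta> b"
  unfolding Pk_def by (intro prod_pos) (auto intro: sin_gt_zero)

lemma Pk_rot:
  assumes "\<theta> * N = pi"
  shows "Pk (Suc m) \<theta> (\<lambda>j. if j = 0 then b m + N else b (j - 1)) = Pk (Suc m) \<theta> b"
proof -
  have "Pk (Suc m) \<theta> (\<lambda>j. if j = 0 then b m + N else b (j - 1))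
     = (\<Prod>j<m. sin (\<theta> * (b m + N - b j))) * Pk m \<theta> b"
    by (simp add: Pk_first)
  also have "(\<Prod>j<m. sin (\<theta> * (b m + N - b j))) = (\<Prod>j<m. sin (\<theta> * (b j - b m)))"
  proof (intro prod.cong refl)
    fix j
    have "\<theta> * (b m + N - b j) = - (\<theta> * (b j - b m)) + pi" using assms by (simp add: algebra_simps)
    then show "sin (\<theta> * (b m + N - b j)) = sin (\<theta> * (b j - b m))" by (simp add: sin_add)
  qed
  also have "\<dots> * Pk m \<theta> b = Pk (Suc m) \<theta> b" unfolding Pk_def by (simp add: mult.commute)
  finally show ?thesis .
qed

lemma Pk_eigen:
  assumes nz: "\<And>i j. i < k \<Longrightarrow> j < k \<Longrightarrow> i \<noteq> j \<Longrightarrow> sin (\<theta> * (b i - b j)) \<noteq> 0"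
    and st: "sin \<theta> \<noteq> 0"
  shows "(\<Sum>i<k. Pk k \<theta> (b(i := b i - 1))) = (\<Sum>m<k. cos ((real k - 1 - 2 * real m) * \<theta>)) * Pk k \<theta> b"
proof -
  have "(\<Sum>i<k. Pk k \<theta> (b(i := b i - 1)))
     = (\<Sum>i<k. Pk k \<theta> b * (\<Prod>j\<in>{..<k}-{i}. sin (\<theta> * (b i - b j) - \<theta>) / sin (\<theta> * (b i - b j))))"
    by (intro sum.cong refl Pk_ratio) (use nz in auto)
  also have "\<dots> = Pk k \<theta> b * (\<Sum>m<k. cos ((real k - 1 - 2 * real m) * \<theta>))"
    by (simp add: sum_distrib_left[symmetric] trig_lagrange[OF nz st])
  finally show ?thesis by (simp add: mult.commute)
qed




definition decp :: "nat list \<Rightarrow> nat \<Rightarrow> nat list" where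
  "decp mu i = mu[i := mu ! i - 1]"

definition wrapp :: "nat \<Rightarrow> nat \<Rightarrow> nat list \<Rightarrow> nat list" where
  "wrapp k n mu = (n - k) # map Suc (butlast mu)"

lemma part_len: "l \<in> partitions k n \<Longrightarrow> length l = k"
  unfolding partitions_def by auto

lemma part_le: "l \<in> partitions k n \<Longrightarrow> i < k \<Longrightarrow> l ! i \<le> n - k"
  unfolding partitions_def by auto

lemma part_sorted: "l \<in> partitions k n \<Longrightarrow> i \<le> j \<Longrightarrow> j < k \<Longrightarrow> l ! j \<le> l ! i"
  unfolding partitions_def using sorted_wrt_nth_less[of "(\<ge>)" l i j]
  by (cases "i = j") auto

lemma partI:
  assumes "length l = k" "\<And>i. i < k \<Longrightarrow> l ! i \<le> n - k"
    "\<And>i j. i < j \<Longrightarrow> j < k \<Longrightarrow> l ! j \<le> l ! i"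
  shows "l \<in> partitions k n"
  unfolding partitions_def using assms
  by (auto simp: sorted_wrt_iff_nth_less in_set_conv_nth)

lemma finite_partitions: "finite (partitions k n)"
proof -
  have "partitions k n \<subseteq> {l. set l \<subseteq> {..n - k} \<and> length l = k}"
    unfolding partitions_def by auto
  then show ?thesis using finite_lists_length_eq[of "{..n-k}" k] finite_subset by blast
qed

lemma star_set:
  assumes mu: "mu \<in> partitions k n" and k: "1 \<le> k"
  shows "{lam \<in> partitions k n. star_exists k n lam \<and> mu = pstar lam}
       = (if last mu = 0 \<and> wrapp k n mu \<in> partitions k n \<and> 0 < last (wrapp k n mu) then {wrapp k n mu} else {})"
proof -
  have mune: "mu \<noteq> []" using part_len[OF mu] k by auto
  have A: "lam = wrapp k n mu \<and> last mu = 0 \<and> wrapp k n mu \<in> partitions k n \<and> 0 < last (wrapp k n mu)"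
    if lam: "lam \<in> partitions k n" "star_exists k n lam" "mu = pstar lam" for lam
  proof -
    have ne: "lam \<noteq> []" and hd: "hd lam = n - k" and la: "last lam > 0"
      using lam(2) unfolding star_exists_def by auto
    have lamc: "lam = hd lam # tl lam" using ne by simp
    have pos: "\<forall>x\<in>set (tl lam). 0 < x"
    proof
      fix x assume x: "x \<in> set (tl lam)"
      obtain j where j: "j < length (tl lam)" "x = tl lam ! j" using x by (auto simp: in_set_conv_nth)
      have len: "length lam = k" using part_len[OF lam(1)] .
      have "last lam = lam ! (k - 1)" using ne len by (simp add: last_conv_nth)
      moreover have "tl lam ! j = lam ! Suc j" using ne by (cases lam) auto
      moreover have "lam ! (k - 1) \<le> lam ! Suc j" using j len by (intro part_sorted[OF lam(1)]) auto
      ultimately have "last lam \<le> x" using j by simp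
      then show "0 < x" using la by simp
    qed
    have mueq: "mu = map (\<lambda>x. x - 1) (tl lam) @ [0]" using lam(3) unfolding pstar_def by simp
    then have "butlast mu = map (\<lambda>x. x - 1) (tl lam)" by simp
    then have "map Suc (butlast mu) = tl lam" using pos by (simp add: map_idI)
    then have "lam = wrapp k n mu" unfolding wrapp_def using hd lamc by simp
    moreover have "last mu = 0" using mueq by simp
    ultimately show ?thesis using lam(1) la by simp
  qed
  have B: "star_exists k n (wrapp k n mu) \<and> mu = pstar (wrapp k n mu)"
    if "last mu = 0" "0 < last (wrapp k n mu)"
  proof -
    have "pstar (wrapp k n mu) = butlast mu @ [last mu]"
      using that unfolding pstar_def wrapp_def by (simp add: comp_def)
    also have "\<dots> = mu" using mune by simp
    finally show ?thesis using that mune unfolding star_exists_def wrapp_def by simp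
  qed
  show ?thesis
  proof (cases "last mu = 0 \<and> wrapp k n mu \<in> partitions k n \<and> 0 < last (wrapp k n mu)")
    case True
    have "{lam \<in> partitions k n. star_exists k n lam \<and> mu = pstar lam} = {wrapp k n mu}"
    proof
      show "{lam \<in> partitions k n. star_exists k n lam \<and> mu = pstar lam} \<subseteq> {wrapp k n mu}"
        using A by blast
      show "{wrapp k n mu} \<subseteq> {lam \<in> partitions k n. star_exists k n lam \<and> mu = pstar lam}"
        using B True by simp
    qed
    then show ?thesis using True by simp
  next
    case False
    have "{lam \<in> partitions k n. star_exists k n lam \<and> mu = pstar lam} = {}"
      using A False by blast
    then show ?thesis using False by (simp only: if_False)
  qed
qed

lemma decp_nth: "i < length mu \<Longrightarrow> decp mu i ! j = (if j = i then mu ! i - 1 else mu ! j)"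
  unfolding decp_def by (simp add: nth_list_update)

lemma decp_len[simp]: "length (decp mu i) = length mu"
  unfolding decp_def by simp

lemma cont_set:
  assumes mu: "mu \<in> partitions k n"
  shows "{lam \<in> partitions k n. mu \<in> partitions k n \<and> Defs.psize mu = Defs.psize lam + 1 \<and> pcontained lam mu}
       = decp mu ` {i. i < k \<and> 0 < mu ! i \<and> decp mu i \<in> partitions k n}"
proof (intro equalityI subsetI)
  fix lam assume "lam \<in> {lam \<in> partitions k n. mu \<in> partitions k n \<and> Defs.psize mu = Defs.psize lam + 1 \<and> pcontained lam mu}"
  then have lam: "lam \<in> partitions k n" and ps: "Defs.psize mu = Defs.psize lam + 1" and pc: "pcontained lam mu" by auto
  have lk: "length lam = k" and mk: "length mu = k" using part_len lam mu by auto
  have le: "\<And>i. i < k \<Longrightarrow> lam ! i \<le> mu ! i" using pc lk unfolding pcontained_def by auto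
  define d where "d i = mu ! i - lam ! i" for i
  have "(\<Sum>i<k. mu ! i) = (\<Sum>i<k. lam ! i + d i)"
    using le unfolding d_def by (intro sum.cong) auto
  also have "\<dots> = (\<Sum>i<k. lam ! i) + (\<Sum>i<k. d i)" by (simp add: sum.distrib)
  finally have "(\<Sum>i<k. d i) = 1"
    using ps lk mk unfolding Defs.psize_def by (simp add: sum_list_sum_nth atLeast0LessThan)
  then obtain i where i: "i < k" "d i \<noteq> 0" by (metis sum.neutral lessThan_iff zero_neq_one)
  have "(\<Sum>i<k. d i) = d i + (\<Sum>j\<in>{..<k}-{i}. d j)" using i by (simp add: sum.remove)
  then have s: "d i + (\<Sum>j\<in>{..<k}-{i}. d j) = 1" using \<open>(\<Sum>i<k. d i) = 1\<close> by simp
  then have di: "d i = 1" and rest: "(\<Sum>j\<in>{..<k}-{i}. d j) = 0" using i(2) by arith+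
  have dj: "d j = 0" if "j < k" "j \<noteq> i" for j using rest that by simp
  have "lam = decp mu i"
  proof (rule nth_equalityI)
    show "length lam = length (decp mu i)" using lk mk by simp
    fix j assume "j < length lam"
    then show "lam ! j = decp mu i ! j"
      using lk mk i di dj[of j] le[of j] unfolding d_def by (auto simp: decp_nth)
  qed
  moreover have "0 < mu ! i" using di unfolding d_def by simp
  ultimately show "lam \<in> decp mu ` {i. i < k \<and> 0 < mu ! i \<and> decp mu i \<in> partitions k n}"
    using i lam by blast
next
  fix lam assume "lam \<in> decp mu ` {i. i < k \<and> 0 < mu ! i \<and> decp mu i \<in> partitions k n}"
  then obtain i where i: "i < k" "0 < mu ! i" "decp mu i \<in> partitions k n" and lam: "lam = decp mu i" by auto
  have mk: "length mu = k" using part_len mu by auto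
  have "Defs.psize lam = Defs.psize mu + (mu ! i - 1) - mu ! i"
    unfolding lam Defs.psize_def decp_def using i mk by (simp add: sum_list_update)
  moreover have "mu ! i \<le> Defs.psize mu" unfolding Defs.psize_def using i mk by (simp add: elem_le_sum_list)
  ultimately have "Defs.psize mu = Defs.psize lam + 1" using i by simp
  moreover have "pcontained lam mu" unfolding pcontained_def lam using i mk by (auto simp: decp_nth)
  moreover have "lam \<in> partitions k n" using i lam by simp
  ultimately show "lam \<in> {lam \<in> partitions k n. mu \<in> partitions k n \<and> Defs.psize mu = Defs.psize lam + 1 \<and> pcontained lam mu}"
    using mu by blast
qed

lemma decp_inj: "length mu = k \<Longrightarrow> inj_on (decp mu) {i. i < k \<and> 0 < mu ! i \<and> P i}"
proof (rule inj_onI)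
  fix i j assume "length mu = k" "i \<in> {i. i < k \<and> 0 < mu ! i \<and> P i}" "j \<in> {i. i < k \<and> 0 < mu ! i \<and> P i}"
    "decp mu i = decp mu j"
  then have "i < length mu" "0 < mu ! i" "decp mu i ! i = decp mu j ! i" by auto
  then show "i = j" using decp_nth[of i mu i] decp_nth[of j mu i] \<open>j \<in> _\<close> \<open>length mu = k\<close>
    by (auto split: if_splits)
qed

lemma expand:
  fixes v :: "nat list \<Rightarrow> complex"
  assumes mu: "mu \<in> partitions k n" and k: "1 \<le> k"
  shows "(\<Sum>lam\<in>partitions k n. c1_hat_coeff k n mu lam * v lam)
    = of_nat n * ((\<Sum>i<k. if 0 < mu ! i \<and> decp mu i \<in> partitions k n then v (decp mu i) else 0)
        + (if last mu = 0 \<and> wrapp k n mu \<in> partitions k n \<and> 0 < last (wrapp k n mu) then v (wrapp k n mu) else 0))"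
proof -
  let ?P = "partitions k n"
  let ?S1 = "\<lambda>lam. star_exists k n lam \<and> mu = pstar lam"
  let ?S2 = "\<lambda>lam. mu \<in> partitions k n \<and> Defs.psize mu = Defs.psize lam + 1 \<and> pcontained lam mu"
  let ?C = "last mu = 0 \<and> wrapp k n mu \<in> partitions k n \<and> 0 < last (wrapp k n mu)"
  have fin: "finite ?P" by (rule finite_partitions)
  have mk: "length mu = k" using part_len[OF mu] .
  have "(\<Sum>lam\<in>?P. c1_hat_coeff k n mu lam * v lam)
      = (\<Sum>lam\<in>?P. (if ?S1 lam then of_nat n * v lam else 0)) + (\<Sum>lam\<in>?P. (if ?S2 lam then of_nat n * v lam else 0))"
  proof -
    have "(\<Sum>lam\<in>?P. c1_hat_coeff k n mu lam * v lam)
      = (\<Sum>lam\<in>?P. (if ?S1 lam then of_nat n * v lam else 0) + (if ?S2 lam then of_nat n * v lam else 0))"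
      unfolding c1_hat_coeff_def by (intro sum.cong refl) (simp add: distrib_right)
    then show ?thesis by (simp only: sum.distrib)
  qed
  also have "(\<Sum>lam\<in>?P. (if ?S1 lam then of_nat n * v lam else 0)) = (\<Sum>lam\<in>{lam\<in>?P. ?S1 lam}. of_nat n * v lam)"
    using fin by (simp add: sum.inter_filter)
  also have "\<dots> = (if ?C then of_nat n * v (wrapp k n mu) else 0)"
    unfolding star_set[OF mu k] by simp
  also have "(\<Sum>lam\<in>?P. (if ?S2 lam then of_nat n * v lam else 0)) = (\<Sum>lam\<in>{lam\<in>?P. ?S2 lam}. of_nat n * v lam)"
    using fin by (simp add: sum.inter_filter)
  also have "\<dots> = (\<Sum>lam\<in>decp mu ` {i. i < k \<and> 0 < mu ! i \<and> decp mu i \<in> ?P}. of_nat n * v lam)"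
    unfolding cont_set[OF mu] ..
  also have "\<dots> = (\<Sum>i\<in>{i. i < k \<and> 0 < mu ! i \<and> decp mu i \<in> ?P}. of_nat n * v (decp mu i))"
    by (subst sum.reindex) (use decp_inj[OF mk] in auto)
  also have "\<dots> = (\<Sum>i\<in>{i\<in>{..<k}. 0 < mu ! i \<and> decp mu i \<in> ?P}. of_nat n * v (decp mu i))"
    by (rule sum.cong) auto
  also have "\<dots> = (\<Sum>i<k. if 0 < mu ! i \<and> decp mu i \<in> ?P then of_nat n * v (decp mu i) else 0)"
    by (rule sum.inter_filter) simp
  finally have F: "(\<Sum>lam\<in>?P. c1_hat_coeff k n mu lam * v lam) = (if ?C then of_nat n * v (wrapp k n mu) else 0) +
     (\<Sum>i<k. if 0 < mu ! i \<and> decp mu i \<in> ?P then of_nat n * v (decp mu i) else 0)" .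
  have H: "(\<Sum>i<k. if 0 < mu ! i \<and> decp mu i \<in> ?P then of_nat n * v (decp mu i) else 0)
     = of_nat n * (\<Sum>i<k. if 0 < mu ! i \<and> decp mu i \<in> ?P then v (decp mu i) else 0)"
    by (subst sum_distrib_left) (rule sum.cong; simp)
  show ?thesis
  proof (cases ?C)
    case True
    show ?thesis unfolding F H using True by (simp only: if_True) (simp add: distrib_left add.commute)
  next
    case False
    show ?thesis unfolding F H using False by (simp only: if_False) simp
  qed
qed




definition aa :: "nat \<Rightarrow> nat list \<Rightarrow> nat \<Rightarrow> real" where
  "aa k l i = real (l ! i) + real (k - 1 - i)"

definition xv :: "nat \<Rightarrow> nat \<Rightarrow> nat list \<Rightarrow> real" where
  "xv k n l = Pk k (pi / real n) (aa k l)"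

definition Dk :: "nat \<Rightarrow> nat \<Rightarrow> real" where
  "Dk k n = (\<Sum>m<k. cos ((real k - 1 - 2 * real m) * (pi / real n)))"

lemma aa_bounds:
  assumes mu: "mu \<in> partitions k n" and "i < j" "j < k" "k \<le> n"
  shows "1 \<le> aa k mu i - aa k mu j" "aa k mu i - aa k mu j \<le> real n - 1"
proof -
  have s: "mu ! j \<le> mu ! i" using part_sorted[OF mu, of i j] assms by auto
  have b: "mu ! i \<le> n - k" using part_le[OF mu, of i] assms by auto
  have e: "aa k mu i - aa k mu j = real (mu ! i) - real (mu ! j) + (real j - real i)"
    unfolding aa_def using assms by (simp add: of_nat_diff)
  show "1 \<le> aa k mu i - aa k mu j" using e s assms by simp
  have "real (mu ! i) \<le> real n - real k" using b assms by (simp add: of_nat_diff)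
  then show "aa k mu i - aa k mu j \<le> real n - 1" using e assms by simp
qed

lemma xv_pos:
  assumes mu: "mu \<in> partitions k n" and kn: "k < n"
  shows "0 < xv k n mu"
  unfolding xv_def
proof (rule Pk_pos)
  fix i j assume ij: "i < j" "j < k"
  have n: "0 < real n" using kn by simp
  have "1 \<le> aa k mu i - aa k mu j" "aa k mu i - aa k mu j \<le> real n - 1"
    using aa_bounds[OF mu ij] kn by auto
  then have d: "0 < aa k mu i - aa k mu j" "aa k mu i - aa k mu j < real n" by auto
  have "pi / real n * (aa k mu i - aa k mu j) < pi / real n * real n"
    using d n by (intro mult_strict_left_mono) auto
  then show "0 < pi / real n * (aa k mu i - aa k mu j) \<and> pi / real n * (aa k mu i - aa k mu j) < pi"
    using n d by simp
qed

lemma aa_nondeg: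
  assumes mu: "mu \<in> partitions k n" and kn: "k < n" and ij: "i < k" "j < k" "i \<noteq> j"
  shows "sin (pi / real n * (aa k mu i - aa k mu j)) \<noteq> 0"
proof -
  have n: "0 < real n" using kn by simp
  have pos: "0 < sin (pi / real n * (aa k mu p - aa k mu q))" if "p < q" "q < k" for p q
  proof -
    have "1 \<le> aa k mu p - aa k mu q" "aa k mu p - aa k mu q \<le> real n - 1"
      using aa_bounds[OF mu that] kn by auto
    then have d: "0 < aa k mu p - aa k mu q" "aa k mu p - aa k mu q < real n" by auto
    have "pi / real n * (aa k mu p - aa k mu q) < pi / real n * real n"
      using d n by (intro mult_strict_left_mono) auto
    then show ?thesis using n d by (intro sin_gt_zero) simp_all
  qed
  show ?thesis
  proof (cases "i < j")
    case True then show ?thesis using pos[of i j] ij by simp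
  next
    case False
    then have "j < i" using ij by simp
    moreover have "pi / real n * (aa k mu i - aa k mu j) = - (pi / real n * (aa k mu j - aa k mu i))"
      by (simp add: algebra_simps)
    ultimately show ?thesis using pos[of j i] ij by simp
  qed
qed

lemma eig_real:
  assumes mu: "mu \<in> partitions k n" and k: "1 \<le> k" and kn: "k < n"
  shows "(\<Sum>i<k. if 0 < mu ! i \<and> decp mu i \<in> partitions k n then xv k n (decp mu i) else 0)
        + (if last mu = 0 \<and> wrapp k n mu \<in> partitions k n \<and> 0 < last (wrapp k n mu) then xv k n (wrapp k n mu) else 0)
       = Dk k n * xv k n mu"
proof -
  let ?P = "partitions k n"
  let ?C = "last mu = 0 \<and> wrapp k n mu \<in> ?P \<and> 0 < last (wrapp k n mu)"
  let ?A = "\<lambda>i. 0 < mu ! i \<and> decp mu i \<in> ?P"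
  define \<theta> where "\<theta> = pi / real n"
  define a where "a = aa k mu"
  define b where "b i = a(i := a i - 1)" for i
  have mk: "length mu = k" using part_len[OF mu] .
  have n: "0 < real n" using kn by simp
  have \<theta>n: "\<theta> * real n = pi" unfolding \<theta>_def using n by simp
  have lastmu: "last mu = mu ! (k - 1)" using mk k by (cases mu) (auto simp: last_conv_nth)
  have key: "(if ?A i then xv k n (decp mu i) else 0) + (if i = k - 1 \<and> ?C then xv k n (wrapp k n mu) else 0)
            = Pk k \<theta> (b i)" if i: "i < k" for i
  proof (cases "?A i")
    case True
    then have "\<not> (i = k - 1 \<and> ?C)" using lastmu by auto
    moreover have "aa k (decp mu i) = b i"
    proof
      fix j show "aa k (decp mu i) j = b i j"
        using True i mk unfolding aa_def b_def a_def by (auto simp: decp_nth of_nat_diff)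
    qed
    ultimately show ?thesis using True unfolding xv_def \<theta>_def by (simp only: if_True if_not_P) simp
  next
    case notA: False
    have collide: "Pk k \<theta> (b i) = 0" if "i + 1 < k" "mu ! (i + 1) = mu ! i"
    proof (rule Pk_zero[of i "i + 1"])
      have "real (k - 1 - i) = real (k - 1 - Suc i) + 1" using that by (simp add: of_nat_diff)
      then have "b i i - b i (i + 1) = 0" using that unfolding b_def a_def aa_def by simp
      then show "sin (\<theta> * (b i i - b i (i + 1))) = 0" by simp
    qed (use that in auto)
    show ?thesis
    proof (cases "0 < mu ! i")
      case True
      have "i + 1 < k \<and> mu ! (i + 1) = mu ! i"
      proof (rule ccontr)
        assume H: "\<not> (i + 1 < k \<and> mu ! (i + 1) = mu ! i)"
        have "decp mu i \<in> ?P"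
        proof (rule partI)
          show "length (decp mu i) = k" using mk by simp
          fix p assume "p < k"
          then show "decp mu i ! p \<le> n - k" using part_le[OF mu, of p] part_le[OF mu, of i] mk i by (auto simp: decp_nth)
        next
          fix p q assume pq: "p < q" "q < k"
          have s: "mu ! q \<le> mu ! p" using part_sorted[OF mu, of p q] pq by simp
          show "decp mu i ! q \<le> decp mu i ! p"
          proof (cases "p = i")
            case True
            then have "i + 1 \<le> q" using pq by simp
            then have "mu ! q \<le> mu ! (i + 1)" using part_sorted[OF mu, of "i + 1" q] pq by simp
            moreover have "mu ! (i + 1) \<le> mu ! i" using part_sorted[OF mu, of i "i + 1"] pq True by simp
            ultimately have "mu ! q < mu ! i" using H pq True by auto
            then show ?thesis using True pq mk by (auto simp: decp_nth)
          next
            case False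
            then show ?thesis using s pq mk i by (auto simp: decp_nth)
          qed
        qed
        then show False using notA True by simp
      qed
      then have "Pk k \<theta> (b i) = 0" using collide by simp
      moreover have "\<not> (i = k - 1 \<and> ?C)" using True lastmu by auto
      ultimately show ?thesis using notA by (simp only: if_not_P) simp
    next
      case False
      then have mi0: "mu ! i = 0" by simp
      show ?thesis
      proof (cases "i = k - 1")
        case False
        then have "i + 1 < k" using i by simp
        moreover have "mu ! (i + 1) = mu ! i" using part_sorted[OF mu, of i "i + 1"] mi0 \<open>i + 1 < k\<close> by simp
        ultimately have "Pk k \<theta> (b i) = 0" using collide by simp
        moreover have "\<not> (i = k - 1 \<and> ?C)" using False by simp
        ultimately show ?thesis using notA by (simp only: if_not_P) simp
      next
        case ik: True
        have lm0: "last mu = 0" using lastmu mi0 ik by simp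
        have lastw: "0 < last (wrapp k n mu)"
        proof (cases "k = 1")
          case True
          then obtain x where "mu = [x]" using mk by (cases mu) auto
          then show ?thesis unfolding wrapp_def using kn True by simp
        next
          case False
          then have "butlast mu \<noteq> []" using mk k by (cases mu) auto
          then show ?thesis unfolding wrapp_def by (simp add: last_map)
        qed
        show ?thesis
        proof (cases "wrapp k n mu \<in> ?P")
          case True
          have "xv k n (wrapp k n mu) = Pk k \<theta> (b i)"
          proof -
            obtain m where m: "k = Suc m" using k by (cases k) auto
            have "xv k n (wrapp k n mu) = Pk (Suc m) \<theta> (\<lambda>j. if j = 0 then b i m + real n else b i (j - 1))"
              unfolding xv_def \<theta>_def[symmetric] m
            proof (rule Pk_cong)
              fix j assume j: "j < Suc m"
              show "aa (Suc m) (wrapp (Suc m) n mu) j = (if j = 0 then b i m + real n else b i (j - 1))"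
              proof (cases "j = 0")
                case True
                then show ?thesis using mi0 ik m kn unfolding aa_def b_def a_def wrapp_def
                  by (simp add: of_nat_diff)
              next
                case False
                then have "butlast mu ! (j - 1) = mu ! (j - 1)" using j m mk by (simp add: nth_butlast)
                moreover have "wrapp (Suc m) n mu ! j = Suc (butlast mu ! (j - 1))"
                  using False j m mk unfolding wrapp_def by (cases j) auto
                ultimately show ?thesis using False j m ik unfolding aa_def b_def a_def
                  by (simp add: of_nat_diff)
              qed
            qed
            also have "\<dots> = Pk (Suc m) \<theta> (b i)" using ik m by (simp add: Pk_rot[OF \<theta>n])
            finally show ?thesis using m by simp
          qed
          then show ?thesis using notA by (simp only: if_not_P) (simp add: ik lm0 lastw True)
        next
          case False
          have m0: "mu ! 0 = n - k"
          proof (rule ccontr)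
            assume H: "mu ! 0 \<noteq> n - k"
            then have lt: "mu ! 0 < n - k" using part_le[OF mu, of 0] k by simp
            have wn: "wrapp k n mu ! j = Suc (mu ! (j - 1))" if "0 < j" "j < k" for j
            proof -
              have "wrapp k n mu ! j = Suc (butlast mu ! (j - 1))"
                using that mk unfolding wrapp_def by (cases j) auto
              then show ?thesis using that mk by (simp add: nth_butlast)
            qed
            have "wrapp k n mu \<in> ?P"
            proof (rule partI)
              show "length (wrapp k n mu) = k" using mk k unfolding wrapp_def by simp
              fix p assume p: "p < k"
              show "wrapp k n mu ! p \<le> n - k"
              proof (cases "p = 0")
                case True then show ?thesis unfolding wrapp_def by simp
              next
                case False
                then have "mu ! (p - 1) \<le> mu ! 0" using part_sorted[OF mu, of 0 "p - 1"] p by simp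
                then show ?thesis using wn[of p] False p lt by simp
              qed
            next
              fix p q assume pq: "p < q" "q < k"
              show "wrapp k n mu ! q \<le> wrapp k n mu ! p"
              proof (cases "p = 0")
                case True
                have "mu ! (q - 1) \<le> mu ! 0" using part_sorted[OF mu, of 0 "q - 1"] pq by simp
                then show ?thesis using wn[of q] True pq lt unfolding wrapp_def by simp
              next
                case False
                have "mu ! (q - 1) \<le> mu ! (p - 1)" using part_sorted[OF mu, of "p - 1" "q - 1"] pq by simp
                then show ?thesis using wn[of q] wn[of p] False pq by simp
              qed
            qed
            then show False using False by simp
          qed
          have k2: "0 < k - 1"
          proof (rule ccontr)
            assume "\<not> 0 < k - 1"
            then have "k = 1" using k by simp
            then show False using m0 mi0 ik kn by simp
          qed
          have "Pk k \<theta> (b i) = 0"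
          proof (rule Pk_zero[of 0 "k - 1"])
            have "b i 0 - b i (k - 1) = real n" using m0 mi0 ik k2 kn unfolding b_def a_def aa_def
              by (simp add: of_nat_diff)
            then show "sin (\<theta> * (b i 0 - b i (k - 1))) = 0" using \<theta>n by simp
          qed (use k2 k in auto)
          then show ?thesis using notA False by (simp only: if_not_P) simp
        qed
      qed
    qed
  qed
  have "(\<Sum>i<k. if ?A i then xv k n (decp mu i) else 0) + (if ?C then xv k n (wrapp k n mu) else 0)
      = (\<Sum>i<k. (if ?A i then xv k n (decp mu i) else 0) + (if i = k - 1 \<and> ?C then xv k n (wrapp k n mu) else 0))"
  proof -
    have "(\<Sum>i<k. (if i = k - 1 \<and> ?C then xv k n (wrapp k n mu) else 0))
        = (\<Sum>i<k. (if i = k - 1 then (if ?C then xv k n (wrapp k n mu) else 0) else 0))"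
      by (intro sum.cong refl) auto
    also have "\<dots> = (if ?C then xv k n (wrapp k n mu) else 0)" using k by (subst sum.delta) auto
    finally show ?thesis by (simp add: sum.distrib)
  qed
  also have "\<dots> = (\<Sum>i<k. Pk k \<theta> (b i))" by (intro sum.cong refl key) simp
  also have "\<dots> = Dk k n * xv k n mu"
    unfolding b_def Dk_def xv_def \<theta>_def a_def
  proof (rule Pk_eigen)
    show "sin (pi / real n) \<noteq> 0" using kn k by (intro order.strict_implies_not_eq[symmetric] sin_gt_zero) (simp_all add: field_simps)
  qed (use aa_nondeg[OF mu kn] in auto)
  finally show ?thesis .
qed




lemma cos_lb: "1 - x\<^sup>2 / 2 \<le> cos (x::real)"
proof -
  have "cos x = cos (2 * (x / 2))" by simp
  also have "\<dots> = 1 - 2 * sin (x / 2) ^ 2" by (rule cos_double_sin)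
  finally have c: "cos x = 1 - 2 * sin (x / 2) ^ 2" .
  have "\<bar>sin (x / 2)\<bar> \<le> \<bar>x / 2\<bar>" by (rule abs_sin_x_le_abs_x)
  then have "sin (x / 2) ^ 2 \<le> (x / 2) ^ 2" by (metis abs_le_square_iff)
  then show ?thesis using c by (simp add: power_divide)
qed

lemma sum_sq_shift: "(\<Sum>m<k. (c - 2 * real m)\<^sup>2) = real k * c\<^sup>2 - 2 * c * real k * (real k - 1) + 2 * (real k - 1) * real k * (2 * real k - 1) / 3"
proof (induction k)
  case 0 then show ?case by simp
next
  case (Suc k)
  show ?case by (simp only: sum.lessThan_Suc Suc.IH) (simp add: power2_eq_square field_simps)
qed

lemma sum_sq: "(\<Sum>m<k. (real k - 1 - 2 * real m)\<^sup>2) = real k * ((real k)\<^sup>2 - 1) / 3"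
  by (subst sum_sq_shift) (simp add: power2_eq_square field_simps)

lemma sq_aux: "((a::real) * t)\<^sup>2 / 2 = t\<^sup>2 / 2 * a\<^sup>2"
  by (simp add: power_mult_distrib)

lemma Dk_lb:
  assumes "0 < n"
  shows "real k - (pi / real n)\<^sup>2 * (real k * ((real k)\<^sup>2 - 1) / 3) / 2 \<le> Dk k n"
proof -
  have "(\<Sum>m<k. 1 - ((real k - 1 - 2 * real m) * (pi / real n))\<^sup>2 / 2) \<le> Dk k n"
    unfolding Dk_def by (intro sum_mono cos_lb)
  moreover have "(\<Sum>m<k. 1 - ((real k - 1 - 2 * real m) * (pi / real n))\<^sup>2 / 2)
     = (\<Sum>m<k. 1 - (pi / real n)\<^sup>2 / 2 * (real k - 1 - 2 * real m)\<^sup>2)"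
    by (intro sum.cong refl) (simp only: sq_aux)
  moreover have "\<dots> = real k - (pi / real n)\<^sup>2 / 2 * (\<Sum>m<k. (real k - 1 - 2 * real m)\<^sup>2)"
    by (simp add: sum_subtractf sum_distrib_left)
  ultimately show ?thesis by (simp add: sum_sq)
qed

lemma ineq_general:
  assumes k: "2 \<le> k" and kn: "pi\<^sup>2 * real k < 6 * real n"
  shows "real (k * (n - k)) + 1 < real n * Dk k n"
proof -
  have "0 \<le> pi\<^sup>2 * real k" by simp
  then have n: "0 < real n" using kn by linarith
  then have n0: "0 < n" by simp
  have k2: "2 \<le> real k" using k by simp
  have "2 * 2 \<le> real k * real k" using k2 by (intro mult_mono) auto
  then have kk: "0 < (real k)\<^sup>2 - 1" by (simp add: power2_eq_square)
  have "3 * 3 < pi * pi" using pi_gt3 by (intro mult_strict_mono) auto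
  then have "9 * real k \<le> pi\<^sup>2 * real k" by (intro mult_right_mono) (auto simp: power2_eq_square)
  then have "k \<le> n" using kn by simp
  have "real n * (real k - (pi / real n)\<^sup>2 * (real k * ((real k)\<^sup>2 - 1) / 3) / 2) \<le> real n * Dk k n"
    using Dk_lb[OF n0, of k] n by (intro mult_left_mono) auto
  moreover have "real n * (real k - (pi / real n)\<^sup>2 * (real k * ((real k)\<^sup>2 - 1) / 3) / 2)
      = real n * real k - pi\<^sup>2 * real k * ((real k)\<^sup>2 - 1) / (6 * real n)"
    using n by (simp add: power_divide field_simps power2_eq_square)
  moreover have "pi\<^sup>2 * real k * ((real k)\<^sup>2 - 1) / (6 * real n) < (real k)\<^sup>2 - 1"
  proof -
    have r: "pi\<^sup>2 * real k / (6 * real n) < 1" using kn n by simp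
    have "((real k)\<^sup>2 - 1) * (pi\<^sup>2 * real k / (6 * real n)) < ((real k)\<^sup>2 - 1) * 1"
      using r kk by (intro mult_strict_left_mono) auto
    then show ?thesis by (simp add: field_simps)
  qed
  moreover have "real (k * (n - k)) + 1 \<le> real n * real k - ((real k)\<^sup>2 - 1)"
    using \<open>k \<le> n\<close> by (simp add: of_nat_diff power2_eq_square algebra_simps)
  ultimately show ?thesis by linarith
qed

lemma pi_sq: "pi\<^sup>2 < 9.9"
proof -
  have "pi \<le> 3.1415926535899" using pi_approx by simp
  then have "pi * pi \<le> 3.1415926535899 * 3.1415926535899" using pi_gt_zero by (intro mult_mono) auto
  then show ?thesis by (simp add: power2_eq_square)
qed

lemma Dk_4_6: "Dk 4 6 = sqrt 3"
proof -
  have "Dk 4 6 = cos (3 * (pi / 6)) + cos (pi / 6) + cos (- (pi / 6)) + cos (- (3 * (pi / 6)))"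
    unfolding Dk_def by (simp add: numeral_eq_Suc lessThan_Suc algebra_simps)
  also have "3 * (pi / 6) = pi / 2" by simp
  finally show ?thesis by (simp add: cos_30)
qed

lemma Dk_5_8: "Dk 5 8 = 1 + sqrt 2"
proof -
  have "Dk 5 8 = cos (4 * (pi / 8)) + cos (2 * (pi / 8)) + cos 0 + cos (- (2 * (pi / 8))) + cos (- (4 * (pi / 8)))"
    unfolding Dk_def by (simp add: numeral_eq_Suc lessThan_Suc algebra_simps)
  also have "4 * (pi / 8) = pi / 2" by simp
  also have "2 * (pi / 8) = pi / 4" by simp
  finally show ?thesis by (simp add: cos_45)
qed

lemma Dk_1: "Dk 1 n = 1"
  unfolding Dk_def by simp

lemma Dk_2_3: "Dk 2 3 = 1"
proof -
  have "Dk 2 3 = cos (pi / 3) + cos (- (pi / 3))"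
    unfolding Dk_def by (simp add: numeral_eq_Suc lessThan_Suc algebra_simps)
  then show ?thesis by (simp add: cos_60)
qed

lemma Dk_3_4: "Dk 3 4 = 1"
proof -
  have "Dk 3 4 = cos (2 * (pi / 4)) + cos 0 + cos (- (2 * (pi / 4)))"
    unfolding Dk_def by (simp add: numeral_eq_Suc lessThan_Suc algebra_simps)
  also have "2 * (pi / 4) = pi / 2" by simp
  finally show ?thesis by simp
qed

lemma ineq_all:
  assumes "(k = 2 \<and> 4 \<le> n) \<or> (k = 3 \<and> 5 \<le> n) \<or> (4 \<le> k \<and> 2 * (k - 1) \<le> n)"
  shows "real (k * (n - k)) + 1 < real n * Dk k n"
proof -
  have p: "pi\<^sup>2 < 9.9" by (rule pi_sq)
  consider "k = 2 \<and> 4 \<le> n" | "k = 3 \<and> 5 \<le> n" | "k = 4 \<and> n = 6" | "k = 5 \<and> n = 8"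
    | "4 \<le> k \<and> 2 * (k - 1) \<le> n \<and> \<not> (k = 4 \<and> n = 6) \<and> \<not> (k = 5 \<and> n = 8)"
    using assms by blast
  then show ?thesis
  proof cases
    case 1
    then have "real n \<ge> 4" by simp
    then show ?thesis using 1 p by (intro ineq_general) auto
  next
    case 2
    then have "real n \<ge> 5" by simp
    then show ?thesis using 2 p by (intro ineq_general) auto
  next
    case 3
    have "(3/2::real) < sqrt 3" by (rule real_less_rsqrt) (simp add: power2_eq_square)
    then show ?thesis using 3 by (simp add: Dk_4_6)
  next
    case 4
    have "(1::real) < sqrt 2" by (rule real_less_rsqrt) (simp add: power2_eq_square)
    then show ?thesis using 4 by (simp add: Dk_5_8)
  next
    case 5
    then have k4: "4 \<le> k" and kn: "2 * (k - 1) \<le> n" by auto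
    have "pi\<^sup>2 * real k < 6 * real n"
    proof (cases "k \<ge> 6")
      case True
      have "real (2 * (k - 1)) \<le> real n" using kn by linarith
      then have "2 * real k - 2 \<le> real n" using k4 by (simp add: of_nat_diff)
      moreover have "pi\<^sup>2 * real k < 9.9 * real k" using p k4 by simp
      moreover have "(6::real) \<le> real k" using True by simp
      ultimately show ?thesis by linarith
    next
      case False
      then have "k = 4 \<or> k = 5" using k4 by auto
      then show ?thesis
      proof
        assume k: "k = 4"
        then have "n \<ge> 7" using 5 by auto
        then have "real n \<ge> 7" by simp
        then show ?thesis using k p by simp
      next
        assume k: "k = 5"
        then have "n \<ge> 9" using 5 by auto
        then have "real n \<ge> 9" by simp
        then show ?thesis using k p by simp
      qed
    qed
    then show ?thesis using k4 by (intro ineq_general) auto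
  qed
qed


lemma replicate_part: "k \<le> n \<Longrightarrow> replicate k 0 \<in> partitions k n"
  by (rule partI) auto

lemma eig_exists:
  assumes k: "1 \<le> k" and kn: "k < n"
  shows "c1_hat_eigenvalue k n (complex_of_real (real n * Dk k n))"
  unfolding c1_hat_eigenvalue_def
proof (intro exI conjI ballI)
  let ?v = "\<lambda>l. complex_of_real (xv k n l)"
  show "\<exists>lam\<in>partitions k n. ?v lam \<noteq> 0"
    using replicate_part[of k n] xv_pos[OF replicate_part[of k n] kn] kn by (intro bexI[of _ "replicate k 0"]) auto
  fix mu assume mu: "mu \<in> partitions k n"
  let ?A = "\<lambda>i. 0 < mu ! i \<and> decp mu i \<in> partitions k n"
  let ?C = "last mu = 0 \<and> wrapp k n mu \<in> partitions k n \<and> 0 < last (wrapp k n mu)"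
  have "(\<Sum>i<k. if ?A i then ?v (decp mu i) else 0) + (if ?C then ?v (wrapp k n mu) else 0)
      = complex_of_real ((\<Sum>i<k. if ?A i then xv k n (decp mu i) else 0) + (if ?C then xv k n (wrapp k n mu) else 0))"
    unfolding of_real_add of_real_sum by (intro arg_cong2[where f="(+)"] sum.cong refl) auto
  also have "\<dots> = complex_of_real (Dk k n * xv k n mu)" using eig_real[OF mu k kn] by simp
  finally show "(\<Sum>lam\<in>partitions k n. c1_hat_coeff k n mu lam * ?v lam) = complex_of_real (real n * Dk k n) * ?v mu"
    unfolding expand[OF mu k] by simp
qed

lemma finite_real_eigs: "finite (real_eigenvalues k n)"
proof -
  have "finite {z. c1_hat_eigenvalue k n z}"
    unfolding c1_hat_eigenvalue_def by (rule finite_eigs_gen[OF finite_partitions])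
  then have "finite (complex_of_real -` {z. c1_hat_eigenvalue k n z})"
    by (rule finite_vimageI) (simp add: inj_on_def)
  then show ?thesis unfolding real_eigenvalues_def by (simp add: vimage_def)
qed

lemma eig_bound:
  assumes k: "1 \<le> k" and kn: "k < n"
    and cnt: "\<And>mu. mu \<in> partitions k n \<Longrightarrow>
       card {i\<in>{..<k}. 0 < mu ! i \<and> decp mu i \<in> partitions k n}
       + (if last mu = 0 \<and> wrapp k n mu \<in> partitions k n \<and> 0 < last (wrapp k n mu) then 1 else 0) \<le> (1::nat)"
    and ev: "c1_hat_eigenvalue k n z"
  shows "norm z \<le> real n"
proof -
  let ?P = "partitions k n"
  obtain v l0 where l0: "l0 \<in> ?P" "v l0 \<noteq> 0"
    and ev: "\<And>mu. mu \<in> ?P \<Longrightarrow> (\<Sum>lam\<in>?P. c1_hat_coeff k n mu lam * v lam) = z * v mu"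
    using ev unfolding c1_hat_eigenvalue_def by blast
  define M where "M = Max ((\<lambda>l. norm (v l)) ` ?P)"
  have fin: "finite ((\<lambda>l. norm (v l)) ` ?P)" using finite_partitions by simp
  have Mge: "\<And>l. l \<in> ?P \<Longrightarrow> norm (v l) \<le> M" unfolding M_def using fin by (intro Max_ge) auto
  have "M \<in> (\<lambda>l. norm (v l)) ` ?P" unfolding M_def using fin l0 by (intro Max_in) auto
  then obtain mu where mu: "mu \<in> ?P" and Mmu: "norm (v mu) = M" by auto
  have "0 < norm (v l0)" using l0(2) by simp
  then have Mpos: "0 < M" using Mge[OF l0(1)] by linarith
  let ?A = "\<lambda>i. 0 < mu ! i \<and> decp mu i \<in> ?P"
  let ?C = "last mu = 0 \<and> wrapp k n mu \<in> ?P \<and> 0 < last (wrapp k n mu)"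
  have b1: "norm (\<Sum>i<k. if ?A i then v (decp mu i) else 0) \<le> (\<Sum>i<k. if ?A i then M else 0)"
    by (rule order.trans[OF norm_sum]) (intro sum_mono, auto intro: Mge)
  have s1: "(\<Sum>i<k. if ?A i then M else 0) = M * real (card {i\<in>{..<k}. ?A i})"
    by (subst sum.inter_filter[symmetric]) auto
  have b2: "norm (if ?C then v (wrapp k n mu) else 0) \<le> M * (if ?C then 1 else 0)"
    using Mge Mpos by auto
  have "norm ((\<Sum>i<k. if ?A i then v (decp mu i) else 0) + (if ?C then v (wrapp k n mu) else 0))
      \<le> M * (real (card {i\<in>{..<k}. ?A i}) + (if ?C then 1 else 0))"
    using b1 s1 b2 norm_triangle_ineq[of "\<Sum>i<k. if ?A i then v (decp mu i) else 0" "if ?C then v (wrapp k n mu) else 0"]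
    by (simp add: distrib_left)
  also have "\<dots> \<le> M * 1"
  proof (rule mult_left_mono)
    have "card {i\<in>{..<k}. ?A i} + (if ?C then 1 else 0) \<le> (1::nat)" using cnt[OF mu] .
    then show "real (card {i\<in>{..<k}. ?A i}) + (if ?C then 1 else 0) \<le> 1"
      by (cases ?C) auto
  qed (use Mpos in simp)
  finally have nb: "norm ((\<Sum>i<k. if ?A i then v (decp mu i) else 0) + (if ?C then v (wrapp k n mu) else 0)) \<le> M"
    by simp
  have "norm z * M = norm (z * v mu)" using Mmu by (simp add: norm_mult)
  also have "\<dots> = norm (of_nat n * ((\<Sum>i<k. if ?A i then v (decp mu i) else 0) + (if ?C then v (wrapp k n mu) else 0)))"
    using ev[OF mu] expand[OF mu k, of v] by simp
  also have "\<dots> \<le> real n * M" using nb by (simp add: norm_mult mult_left_mono)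
  finally have "norm z * M \<le> real n * M" .
  then show ?thesis using Mpos by simp
qed

lemma cnt_k1:
  assumes mu: "mu \<in> partitions 1 n"
  shows "card {i\<in>{..<1}. 0 < mu ! i \<and> decp mu i \<in> partitions 1 n}
       + (if last mu = 0 \<and> wrapp 1 n mu \<in> partitions 1 n \<and> 0 < last (wrapp 1 n mu) then 1 else 0) \<le> (1::nat)"
proof -
  have m: "length mu = 1" using part_len[OF mu] .
  then have lm: "last mu = mu ! 0" by (cases mu) auto
  have sub: "{i\<in>{..<1::nat}. 0 < mu ! i \<and> decp mu i \<in> partitions 1 n} \<subseteq> {0}" by auto
  then have c: "card {i\<in>{..<1::nat}. 0 < mu ! i \<and> decp mu i \<in> partitions 1 n} \<le> 1"
    by (metis card.empty card.insert finite.intros(1) card_mono empty_iff finite.emptyI finite_insert One_nat_def)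
  show ?thesis
  proof (cases "last mu = 0")
    case True
    then have e: "{i\<in>{..<1::nat}. 0 < mu ! i \<and> decp mu i \<in> partitions 1 n} = {}" using lm by auto
    show ?thesis unfolding e by simp
  next
    case False
    then show ?thesis using c by simp
  qed
qed

lemma cnt_proj:
  assumes mu: "mu \<in> partitions k n" and k: "2 \<le> k" and nk: "n - k = 1"
  shows "card {i\<in>{..<k}. 0 < mu ! i \<and> decp mu i \<in> partitions k n}
       + (if last mu = 0 \<and> wrapp k n mu \<in> partitions k n \<and> 0 < last (wrapp k n mu) then 1 else 0) \<le> (1::nat)"
proof -
  let ?A = "\<lambda>i. 0 < mu ! i \<and> decp mu i \<in> partitions k n"
  have mk: "length mu = k" using part_len[OF mu] .
  have next0: "mu ! (i + 1) = 0" if "?A i" "i + 1 < k" for i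
  proof -
    have "decp mu i ! (i + 1) \<le> decp mu i ! i" using part_sorted[OF conjunct2[OF that(1)], of i "i + 1"] that by simp
    moreover have "mu ! i \<le> 1" using part_le[OF mu, of i] that nk by simp
    ultimately show ?thesis using that mk by (simp add: decp_nth)
  qed
  have uniq: "i = j" if "i < k" "j < k" "?A i" "?A j" for i j
  proof (rule ccontr)
    assume "i \<noteq> j"
    then consider "i < j" | "j < i" by linarith
    then show False
    proof cases
      case 1
      have "mu ! j \<le> mu ! (i + 1)" using part_sorted[OF mu, of "i + 1" j] 1 that by simp
      then show False using next0[of i] that 1 by simp
    next
      case 2
      have "mu ! i \<le> mu ! (j + 1)" using part_sorted[OF mu, of "j + 1" i] 2 that by simp
      then show False using next0[of j] that 2 by simp
    qed
  qed
  have c: "card {i\<in>{..<k}. ?A i} \<le> 1"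
  proof -
    have "card {i\<in>{..<k}. ?A i} \<le> Suc 0" using uniq by (subst card_le_Suc0_iff_eq) auto
    then show ?thesis by simp
  qed
  show ?thesis
  proof (cases "last mu = 0 \<and> wrapp k n mu \<in> partitions k n \<and> 0 < last (wrapp k n mu)")
    case True
    then have w: "wrapp k n mu \<in> partitions k n" by simp
    have "wrapp k n mu ! 1 = Suc (mu ! 0)" using k mk unfolding wrapp_def by (cases mu) (auto simp: nth_butlast)
    moreover have "wrapp k n mu ! 1 \<le> n - k" using part_le[OF w, of 1] k by simp
    ultimately have m0: "mu ! 0 = 0" using nk by simp
    have e: "{i\<in>{..<k}. ?A i} = {}"
    proof -
      have "mu ! i = 0" if "i < k" for i using part_sorted[OF mu, of 0 i] that m0 by simp
      then show ?thesis by auto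
    qed
    show ?thesis unfolding e by simp
  next
    case False
    show ?thesis using c by (simp only: if_not_P[OF False])
  qed
qed

lemma galkin_main:
  assumes k: "1 \<le> k" and kn: "k < n"
    and H: "if grass_iso_proj k n
            then Dk k n = 1 \<and> (\<forall>mu\<in>partitions k n. card {i\<in>{..<k}. 0 < mu ! i \<and> decp mu i \<in> partitions k n}
               + (if last mu = 0 \<and> wrapp k n mu \<in> partitions k n \<and> 0 < last (wrapp k n mu) then 1 else 0) \<le> (1::nat))
            else real (k * (n - k)) + 1 < real n * Dk k n"
  shows "galkin_lower_bound k n"
proof -
  let ?E = "real_eigenvalues k n"
  have fin: "finite ?E" by (rule finite_real_eigs)
  have mem: "real n * Dk k n \<in> ?E" unfolding real_eigenvalues_def using eig_exists[OF k kn] by simp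
  then have ne: "?E \<noteq> {}" by auto
  have ge: "real n * Dk k n \<le> delta0 k n" unfolding delta0_def using fin mem by (rule Max_ge)
  show ?thesis
  proof (cases "grass_iso_proj k n")
    case True
    with H have D1: "Dk k n = 1" and cnt: "\<And>mu. mu \<in> partitions k n \<Longrightarrow> card {i\<in>{..<k}. 0 < mu ! i \<and> decp mu i \<in> partitions k n}
               + (if last mu = 0 \<and> wrapp k n mu \<in> partitions k n \<and> 0 < last (wrapp k n mu) then 1 else 0) \<le> (1::nat)"
      by auto
    have le: "x \<le> real n" if "x \<in> ?E" for x
    proof -
      have "norm (complex_of_real x) \<le> real n"
        using that unfolding real_eigenvalues_def by (intro eig_bound[OF k kn cnt]) auto
      then show ?thesis by simp
    qed
    have "delta0 k n \<le> real n" unfolding delta0_def using fin ne le by (simp add: Max_le_iff)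
    then have d: "delta0 k n = real n" using ge D1 by simp
    have "real (k * (n - k)) + 1 = real n"
      using True kn unfolding grass_iso_proj_def by (auto simp: of_nat_diff)
    then show ?thesis unfolding galkin_lower_bound_def using fin ne d True by simp
  next
    case False
    with H have lt: "real (k * (n - k)) + 1 < real n * Dk k n" by simp
    then show ?thesis unfolding galkin_lower_bound_def using fin ne ge False by simp
  qed
qed

theorem proposition3p5:
  shows "(\<forall>n\<ge>2. galkin_lower_bound 1 n)
       \<and> (\<forall>n\<ge>3. galkin_lower_bound 2 n)
       \<and> (\<forall>n\<ge>4. galkin_lower_bound 3 n)
       \<and> (\<forall>k n. k \<ge> 4 \<and> n \<ge> 2 * (k - 1) \<longrightarrow> galkin_lower_bound k n)"
proof (intro conjI allI impI)
  fix n :: nat assume n: "2 \<le> n"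
  show "galkin_lower_bound 1 n"
    by (rule galkin_main) (use n cnt_k1 Dk_1 in \<open>auto simp: grass_iso_proj_def\<close>)
next
  fix n :: nat assume n: "3 \<le> n"
  show "galkin_lower_bound 2 n"
  proof (cases "n = 3")
    case True
    show ?thesis
      by (rule galkin_main) (use True cnt_proj[of _ 2 3] Dk_2_3 in \<open>auto simp: grass_iso_proj_def\<close>)
  next
    case False
    then have "4 \<le> n" using n by simp
    then show ?thesis
      by (intro galkin_main) (use ineq_all[of 2 n] in \<open>auto simp: grass_iso_proj_def\<close>)
  qed
next
  fix n :: nat assume n: "4 \<le> n"
  show "galkin_lower_bound 3 n"
  proof (cases "n = 4")
    case True
    show ?thesis
      by (rule galkin_main) (use True cnt_proj[of _ 3 4] Dk_3_4 in \<open>auto simp: grass_iso_proj_def\<close>)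
  next
    case False
    then have "5 \<le> n" using n by simp
    then show ?thesis
      by (intro galkin_main) (use ineq_all[of 3 n] in \<open>auto simp: grass_iso_proj_def\<close>)
  qed
next
  fix k n :: nat assume kn: "4 \<le> k \<and> 2 * (k - 1) \<le> n"
  then have "k + 2 \<le> n" by arith
  then show "galkin_lower_bound k n"
    by (intro galkin_main) (use kn ineq_all[of k n] in \<open>auto simp: grass_iso_proj_def\<close>)
qed

end
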